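(* In the $1/4$-rebate Marshallian Match, for every feasible bidder–asker pair $(i,j)$ and every strategy profile $(b,a)$, in every realization, $$u_i(b_{-i},a_{-j},b_i',a_j')+u_j(b_{-i},a_{-j},b_i',a_j')\;\ge\;\frac{s_{ij}}{4},$$ where $b_i'$ is the truthful strategy of $i$ ($b'_{i\ell}(t)=v_{i\ell}$ for all feasible askers $\ell$ and all $t$) and $a_j'$ is the truthful strategy of $j$ ($a'_{j\ell}(t)=c_{j\ell}$ for all feasible bidders $\ell$ and all $t$).
   Context: Bipartite setting: bidders and askers; bidder $i$ has value $v_{i\ell}\in\mathbb R$ for matching asker $\ell$ and asker $j$ has cost $c_{j\ell}\in\mathbb R$ for matching bidder $\ell$; surplus $s_{ij}=v_{ij}-c_{ji}$. $1/4$-rebate Marshallian Match: a global price $p(t)$ decreases continuously with $p(0)=+\infty$, $p(1)=0$. Each unmatched bidder $i$ maintains a bid $b_{i\ell}(t)\in\mathbb R$ on each feasible asker $\ell$, and each unmatched asker $j$ an ask $a_{j\ell}(t)\in\mathbb R$ on each feasible bidder $\ell$. No agent sees others' bids/asks; the only information received is being matched. As soon as an unmatched bidder $i$ and asker $j$ satisfy $b_{ij}(t)-a_{ji}(t)\ge p(t)$, they are matched and leave; the bidder pays $b_{ij}$, the asker receives $a_{ji}$, and each receives a rebate $(b_{ij}-a_{ji})/4$. Thus the bidder's utility is $v_{ij}-b_{ij}+(b_{ij}-a_{ji})/4$ and the asker's is $a_{ji}-c_{ji}+(b_{ij}-a_{ji})/4$; unmatched agents get $0$. $(b_{-i},a_{-j},b_i',a_j')$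 denotes the profile where $i$ and $j$ switch to $b_i'$, $a_j'$ and all others keep their strategies. *)

theory Defs
  imports "HOL-Analysis.Analysis"
begin

(* Bidders have type 'b, askers type 'a.  E :: ('b \<times> 'a) set is the set of feasible
   bidder-asker pairs.  A bid strategy b i l t is bidder i's bid on asker l at time t;
   an ask strategy a j l t is asker j's ask on bidder l at time t. *)

definition price_clock :: "(real \<Rightarrow> real) \<Rightarrow> bool" where
  "price_clock p \<longleftrightarrow>
     continuous_on {0<..1} p \<and>
     strict_antimono_on {0<..1} p \<and>
     p 1 = 0 \<and>
     filterlim p at_top (at_right 0)"

definition is_matching :: "('b \<times> 'a) set \<Rightarrow> ('b \<times> 'a) set \<Rightarrow> bool" where
  "is_matching E M \<longleftrightarrow> M \<subseteq> E \<and>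
     (\<forall>i j i' j'. (i, j) \<in> M \<longrightarrow> (i', j') \<in> M \<longrightarrow> (i = i' \<longleftrightarrow> j = j'))"

text \<open>A realization of the Marshallian Match under profile (b,a): a matching M
  together with matching times \<tau>.  Ties among simultaneous matches are resolved arbitrarily.\<close>
definition realization ::
  "(real \<Rightarrow> real) \<Rightarrow> ('b \<times> 'a) set \<Rightarrow> ('b \<Rightarrow> 'a \<Rightarrow> real \<Rightarrow> real) \<Rightarrow>
   ('a \<Rightarrow> 'b \<Rightarrow> real \<Rightarrow> real) \<Rightarrow> ('b \<times> 'a) set \<Rightarrow> ('b \<times> 'a \<Rightarrow> real) \<Rightarrow> bool" where
  "realization p E b a M \<tau> \<longleftrightarrow>
     is_matching E M \<and>
     (\<forall>i j. (i, j) \<in> M \<longrightarrow> \<tau> (i, j) \<in> {0<..1} \<and>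
        b i j (\<tau> (i, j)) - a j i (\<tau> (i, j)) \<ge> p (\<tau> (i, j))) \<and>
     (\<forall>i j t. (i, j) \<in> E \<longrightarrow> t \<in> {0<..1} \<longrightarrow> b i j t - a j i t \<ge> p t \<longrightarrow>
        (\<exists>i' j'. (i', j') \<in> M \<and> (i' = i \<or> j' = j) \<and> \<tau> (i', j') \<le> t))"

definition bidder_util ::
  "('b \<Rightarrow> 'a \<Rightarrow> real) \<Rightarrow> ('b \<Rightarrow> 'a \<Rightarrow> real \<Rightarrow> real) \<Rightarrow> ('a \<Rightarrow> 'b \<Rightarrow> real \<Rightarrow> real) \<Rightarrow>
   ('b \<times> 'a) set \<Rightarrow> ('b \<times> 'a \<Rightarrow> real) \<Rightarrow> 'b \<Rightarrow> real" where
  "bidder_util v b a M \<tau> i =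
     (if \<exists>j. (i, j) \<in> M then
        (let j = (THE j. (i, j) \<in> M); t = \<tau> (i, j)
         in v i j - b i j t + (b i j t - a j i t) / 4)
      else 0)"

definition asker_util ::
  "('a \<Rightarrow> 'b \<Rightarrow> real) \<Rightarrow> ('b \<Rightarrow> 'a \<Rightarrow> real \<Rightarrow> real) \<Rightarrow> ('a \<Rightarrow> 'b \<Rightarrow> real \<Rightarrow> real) \<Rightarrow>
   ('b \<times> 'a) set \<Rightarrow> ('b \<times> 'a \<Rightarrow> real) \<Rightarrow> 'a \<Rightarrow> real" where
  "asker_util c b a M \<tau> j =
     (if \<exists>i. (i, j) \<in> M then
        (let i = (THE i. (i, j) \<in> M); t = \<tau> (i, j)
         in a j i t - c j i + (b i j t - a j i t) / 4)
      else 0)"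

end

theory Submission
  imports Defs
begin

lemma pc_anti:
  assumes "price_clock p" "x \<in> {0<..1}" "y \<in> {0<..1}" "x \<le> y"
  shows "p y \<le> p x"
proof (cases "x = y")
  case False
  with assms have "x < y" by simp
  with assms show ?thesis unfolding price_clock_def monotone_on_def by fastforce
qed simp

lemma pc_nonneg:
  assumes "price_clock p" "x \<in> {0<..1}"
  shows "p x \<ge> 0"
  using pc_anti[OF assms(1) assms(2), of 1] assms unfolding price_clock_def by auto

lemma pc_ivt:
  assumes "price_clock p" "s \<ge> 0"
  shows "\<exists>t\<in>{0<..1}. p t = s"
proof -
  have ev: "eventually (\<lambda>x. p x > s \<and> x < 1 \<and> x > 0) (at_right (0::real))"
    using assms(1) unfolding price_clock_def
  proof (intro eventually_conj)
    show "eventually (\<lambda>x. p x > s) (at_right (0::real))"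
      using assms(1) unfolding price_clock_def filterlim_at_top_dense by blast
    show "eventually (\<lambda>x. x < 1) (at_right (0::real))"
      by (rule eventually_at_rightI[of _ 1]) auto
    show "eventually (\<lambda>x. x > 0) (at_right (0::real))"
      by (rule eventually_at_right_less)
  qed
  have "at_right (0::real) \<noteq> bot" by simp
  from eventually_happens'[OF this ev] obtain t0 where t0: "p t0 > s" "t0 < 1" "t0 > 0" by auto
  have cont: "continuous_on {t0..1} p"
    using assms(1) t0 unfolding price_clock_def by (auto intro: continuous_on_subset)
  have "p 1 \<le> s" using assms unfolding price_clock_def by simp
  from IVT2'[OF this _ _ cont] t0 obtain x where "t0 \<le> x" "x \<le> 1" "p x = s" by force
  with t0 show ?thesis by auto
qed

theorem mainTheorem12:
  fixes p :: "real \<Rightarrow> real"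
    and E :: "('b \<times> 'a) set"
    and v :: "'b \<Rightarrow> 'a \<Rightarrow> real" and c :: "'a \<Rightarrow> 'b \<Rightarrow> real"
    and b :: "'b \<Rightarrow> 'a \<Rightarrow> real \<Rightarrow> real" and a :: "'a \<Rightarrow> 'b \<Rightarrow> real \<Rightarrow> real"
    and M :: "('b \<times> 'a) set" and \<tau> :: "'b \<times> 'a \<Rightarrow> real"
    and i :: 'b and j :: 'a
  assumes "price_clock p"
    and "(i, j) \<in> E"
    and "realization p E (b(i := (\<lambda>l t. v i l))) (a(j := (\<lambda>l t. c j l))) M \<tau>"
  shows "bidder_util v (b(i := (\<lambda>l t. v i l))) (a(j := (\<lambda>l t. c j l))) M \<tau> i
         + asker_util c (b(i := (\<lambda>l t. v i l))) (a(j := (\<lambda>l t. c j l))) M \<tau> j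
         \<ge> (v i j - c j i) / 4"
proof -
  define B where "B = b(i := (\<lambda>l t. v i l))"
  define A where "A = a(j := (\<lambda>l t. c j l))"
  note R = assms(3)[folded B_def A_def, unfolded realization_def]
  have mt: "is_matching E M" using R by blast
  have mc: "\<And>x y. (x, y) \<in> M \<Longrightarrow> \<tau> (x, y) \<in> {0<..1} \<and> B x y (\<tau> (x, y)) - A y x (\<tau> (x, y)) \<ge> p (\<tau> (x, y))"
    using R by blast
  have ac: "\<And>x y t. (x, y) \<in> E \<Longrightarrow> t \<in> {0<..1} \<Longrightarrow> B x y t - A y x t \<ge> p t \<Longrightarrow>
        (\<exists>i' j'. (i', j') \<in> M \<and> (i' = x \<or> j' = y) \<and> \<tau> (i', j') \<le> t)"
    using R by blast
  have uq: "\<And>x y x' y'. (x, y) \<in> M \<Longrightarrow> (x', y') \<in> M \<Longrightarrow> (x = x' \<longleftrightarrow> y = y')"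
    using mt unfolding is_matching_def by blast
  have bu: "bidder_util v B A M \<tau> i = (v i l - A l i (\<tau> (i, l))) / 4" if "(i, l) \<in> M" for l
  proof -
    have "(THE l'. (i, l') \<in> M) = l" using that uq by blast
    then show ?thesis using that unfolding bidder_util_def B_def by (auto simp: Let_def)
  qed
  have au: "asker_util c B A M \<tau> j = (B l j (\<tau> (l, j)) - c j l) / 4" if "(l, j) \<in> M" for l
  proof -
    have "(THE l'. (l', j) \<in> M) = l" using that uq by blast
    then show ?thesis using that unfolding asker_util_def A_def by (auto simp: Let_def)
  qed
  have bl: "bidder_util v B A M \<tau> i \<ge> p (\<tau> (i, l)) / 4" if "(i, l) \<in> M" for l
    using bu[OF that] mc[OF that] by (simp add: B_def)
  have al: "asker_util c B A M \<tau> j \<ge> p (\<tau> (l, j)) / 4" if "(l, j) \<in> M" for l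
    using au[OF that] mc[OF that] by (simp add: A_def)
  have b0: "bidder_util v B A M \<tau> i \<ge> 0"
  proof (cases "\<exists>l. (i, l) \<in> M")
    case True
    then obtain l where l: "(i, l) \<in> M" by blast
    show ?thesis using bl[OF l] pc_nonneg[OF assms(1)] mc[OF l] by force
  qed (simp add: bidder_util_def)
  have a0: "asker_util c B A M \<tau> j \<ge> 0"
  proof (cases "\<exists>l. (l, j) \<in> M")
    case True
    then obtain l where l: "(l, j) \<in> M" by blast
    show ?thesis using al[OF l] pc_nonneg[OF assms(1)] mc[OF l] by force
  qed (simp add: asker_util_def)
  have "bidder_util v B A M \<tau> i + asker_util c B A M \<tau> j \<ge> (v i j - c j i) / 4"
  proof (cases "v i j - c j i \<le> 0")
    case True
    then have "(v i j - c j i) / 4 \<le> 0" by simp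
    with a0 b0 show ?thesis by linarith
  next
    case False
    then obtain t where t: "t \<in> {0<..1}" "p t = v i j - c j i"
      using pc_ivt[OF assms(1), of "v i j - c j i"] by auto
    have "B i j t - A j i t \<ge> p t" using t by (simp add: A_def B_def)
    from ac[OF assms(2) t(1) this] obtain i' j' where
      m: "(i', j') \<in> M" "i' = i \<or> j' = j" "\<tau> (i', j') \<le> t" by blast
    have "p (\<tau> (i', j')) \<ge> p t" using pc_anti[OF assms(1) _ t(1) m(3)] mc[OF m(1)] by blast
    from m(2) show ?thesis
    proof
      assume "i' = i" with bl[of j'] m(1) \<open>p (\<tau> (i', j')) \<ge> p t\<close> t a0 show ?thesis by force
    next
      assume "j' = j" with al[of i'] m(1) \<open>p (\<tau> (i', j')) \<ge> p t\<close> t b0 show ?thesis by force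
    qed
  qed
  then show ?thesis unfolding A_def B_def .
qed

end
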